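(* Let $F$ be a real multilinear polynomial on $[-1,1]^n$, let $\eta>0$, and let $x\in[-1,1]^n$. Put $I=\{i: x_i\in\{-1,1\}\}$. Suppose that: - $x$ is feasible; - $G(x)=0$; - $\frac{\partial F}{\partial x_i}(x)\ne0$ for every $i\in I$. Then $x$ is a local minimum of $F$ in $[-1,1]^n$.
   Context: $\Pi_{[-1,1]^n}$ denotes the Euclidean projection onto $[-1,1]^n$, and $G(x)=\frac1\eta\big(x-\Pi_{[-1,1]^n}(x-\eta\nabla F(x))\big)$ is the gradient mapping. Feasibility: $x$ is feasible if the polynomial obtained from $F$ by fixing $x_i$ to its value for every $i\in I$ is constant. Local minimum in a set $\Delta$: $x$ is a local minimum of $F$ in $\Delta$ if there is $\delta>0$ such that $F(x)\le F(x')$ for all $x'\in\Delta$ with $\|x-x'\|_2^2\le\delta$. *)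

theory Defs
  imports "HOL-Analysis.Analysis"
begin

definition mlpoly_eval :: "('n::finite set \<Rightarrow> real) \<Rightarrow> real^'n \<Rightarrow> real" where
  "mlpoly_eval c x = (\<Sum>S\<in>UNIV. c S * (\<Prod>i\<in>S. x $ i))"

definition mlpoly_partial :: "('n::finite set \<Rightarrow> real) \<Rightarrow> 'n \<Rightarrow> real^'n \<Rightarrow> real" where
  "mlpoly_partial c i x = (\<Sum>S\<in>{S. i \<in> S}. c S * (\<Prod>j\<in>S - {i}. x $ j))"

definition mlpoly_grad :: "('n::finite set \<Rightarrow> real) \<Rightarrow> real^'n \<Rightarrow> real^'n" where
  "mlpoly_grad c x = (\<chi> i. mlpoly_partial c i x)"

definition cube :: "(real^'n::finite) set" where
  "cube = cbox (- 1) 1"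

definition grad_map :: "('n::finite set \<Rightarrow> real) \<Rightarrow> real \<Rightarrow> real^'n \<Rightarrow> real^'n" where
  "grad_map c \<eta> x = (1 / \<eta>) *\<^sub>R (x - closest_point cube (x - \<eta> *\<^sub>R mlpoly_grad c x))"

definition tight :: "real^'n::finite \<Rightarrow> 'n set" where
  "tight x = {i. x $ i = -1 \<or> x $ i = 1}"

text \<open>Feasibility: substituting x_i for every i in I yields a constant polynomial in the
  remaining variables, i.e. every coefficient of a nonempty monomial in the free
  variables vanishes. The coefficient of monomial T (T disjoint from I) after
  substitution is sum over S with S - I = T of c S * prod over S \<inter> I of x_i.\<close>
definition feasible :: "('n::finite set \<Rightarrow> real) \<Rightarrow> real^'n \<Rightarrow> bool" where
  "feasible c x \<longleftrightarrow>
     (\<forall>T. T \<noteq> {} \<and> T \<inter> tight x = {} \<longrightarrow>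
        (\<Sum>S\<in>{S. S - tight x = T}. c S * (\<Prod>i\<in>S \<inter> tight x. x $ i)) = 0)"

definition local_min_in :: "('a::real_normed_vector \<Rightarrow> real) \<Rightarrow> 'a set \<Rightarrow> 'a \<Rightarrow> bool" where
  "local_min_in F \<Delta> x \<longleftrightarrow>
     (\<exists>\<delta>>0. \<forall>x'\<in>\<Delta>. (norm (x - x'))\<^sup>2 \<le> \<delta> \<longrightarrow> F x \<le> F x')"

end

theory Submission
  imports Defs
begin

lemma eval_group:
  fixes c :: "'n::finite set \<Rightarrow> real" and x z :: "real^'n"
  assumes "\<forall>i\<in>I. z$i = x$i"
  shows "mlpoly_eval c z = (\<Sum>T\<in>UNIV. (\<Prod>j\<in>T. z$j) *
            (\<Sum>S\<in>{S. S - I = T}. c S * (\<Prod>i\<in>S \<inter> I. x $ i)))"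
proof -
  have "mlpoly_eval c z = (\<Sum>S\<in>UNIV. c S * (\<Prod>i\<in>S \<inter> I. x$i) * (\<Prod>j\<in>S - I. z$j))"
    unfolding mlpoly_eval_def
  proof (rule sum.cong[OF refl])
    fix S :: "'n set"
    have "(\<Prod>i\<in>S. z$i) = (\<Prod>i\<in>S \<inter> I. z$i) * (\<Prod>i\<in>S - I. z$i)"
      by (rule prod.Int_Diff) simp
    also have "(\<Prod>i\<in>S \<inter> I. z$i) = (\<Prod>i\<in>S \<inter> I. x$i)"
      using assms by (intro prod.cong) auto
    finally show "c S * (\<Prod>i\<in>S. z$i) = c S * (\<Prod>i\<in>S \<inter> I. x$i) * (\<Prod>j\<in>S - I. z$j)"
      by simp
  qed
  also have "\<dots> = (\<Sum>T\<in>UNIV. \<Sum>S\<in>{S\<in>UNIV. S - I = T}. c S * (\<Prod>i\<in>S \<inter> I. x$i) * (\<Prod>j\<in>S - I. z$j))"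
    by (rule sum.group[symmetric]) auto
  also have "\<dots> = (\<Sum>T\<in>UNIV. (\<Prod>j\<in>T. z$j) *
            (\<Sum>S\<in>{S. S - I = T}. c S * (\<Prod>i\<in>S \<inter> I. x $ i)))"
  proof (rule sum.cong[OF refl])
    fix T :: "'n set"
    show "(\<Sum>S\<in>{S\<in>UNIV. S - I = T}. c S * (\<Prod>i\<in>S \<inter> I. x$i) * (\<Prod>j\<in>S - I. z$j)) =
       (\<Prod>j\<in>T. z$j) * (\<Sum>S\<in>{S. S - I = T}. c S * (\<Prod>i\<in>S \<inter> I. x $ i))"
      by (simp add: sum_distrib_left mult.commute)
  qed
  finally show ?thesis .
qed

lemma feas_const:
  fixes c :: "'n::finite set \<Rightarrow> real" and x z :: "real^'n"
  assumes "feasible c x" "\<forall>i\<in>tight x. z$i = x$i"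
  shows "mlpoly_eval c z = mlpoly_eval c x"
proof -
  let ?I = "tight x"
  let ?co = "\<lambda>T. (\<Sum>S\<in>{S. S - ?I = T}. c S * (\<Prod>i\<in>S \<inter> ?I. x $ i))"
  have z: "\<forall>T. T \<noteq> {} \<longrightarrow> ?co T = 0"
  proof (intro allI impI)
    fix T :: "'n set" assume "T \<noteq> {}"
    show "?co T = 0"
    proof (cases "T \<inter> ?I = {}")
      case True thus ?thesis using assms(1) \<open>T \<noteq> {}\<close> unfolding feasible_def by blast
    next
      case False
      hence "{S. S - ?I = T} = {}" by auto
      thus ?thesis by simp
    qed
  qed
  have gen: "mlpoly_eval c w = ?co {}" if "\<forall>i\<in>?I. w$i = x$i" for w :: "real^'n"
  proof -
    have "mlpoly_eval c w = (\<Sum>T\<in>UNIV. (\<Prod>j\<in>T. w$j) * ?co T)"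
      by (rule eval_group[OF that])
    also have "\<dots> = (\<Prod>j\<in>{}. w$j) * ?co {} + (\<Sum>T\<in>UNIV - {{}}. (\<Prod>j\<in>T. w$j) * ?co T)"
      by (rule sum.remove) auto
    also have "(\<Sum>T\<in>UNIV - {{}}. (\<Prod>j\<in>T. w$j) * ?co T) = 0"
      using z by (intro sum.neutral) auto
    finally show ?thesis by simp
  qed
  show ?thesis using gen[OF assms(2)] gen[of x] by simp
qed

lemma eval_split:
  fixes c :: "'n::finite set \<Rightarrow> real" and w :: "real^'n"
  shows "mlpoly_eval c w = (\<Sum>S\<in>{S. i \<notin> S}. c S * (\<Prod>j\<in>S. w$j)) + w$i * mlpoly_partial c i w"
proof -
  have "mlpoly_eval c w = (\<Sum>S\<in>{S. i \<notin> S}. c S * (\<Prod>j\<in>S. w$j)) + (\<Sum>S\<in>{S. i \<in> S}. c S * (\<Prod>j\<in>S. w$j))"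
    unfolding mlpoly_eval_def
    by (subst sum.union_disjoint[symmetric]) (auto intro: sum.cong)
  also have "(\<Sum>S\<in>{S. i \<in> S}. c S * (\<Prod>j\<in>S. w$j)) = w$i * mlpoly_partial c i w"
    unfolding mlpoly_partial_def sum_distrib_left
  proof (rule sum.cong[OF refl])
    fix S assume "S \<in> {S. i \<in> S}"
    hence "(\<Prod>j\<in>S. w$j) = w$i * (\<Prod>j\<in>S - {i}. w$j)"
      by (simp add: prod.remove)
    thus "c S * (\<Prod>j\<in>S. w$j) = w$i * (c S * (\<Prod>j\<in>S - {i}. w$j))" by simp
  qed
  finally show ?thesis .
qed

lemma eval_diff:
  fixes c :: "'n::finite set \<Rightarrow> real" and u w :: "real^'n"
  assumes "\<forall>j. j \<noteq> i \<longrightarrow> u$j = w$j"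
  shows "mlpoly_eval c u - mlpoly_eval c w = (u$i - w$i) * mlpoly_partial c i w"
proof -
  have A: "(\<Sum>S\<in>{S. i \<notin> S}. c S * (\<Prod>j\<in>S. u$j)) = (\<Sum>S\<in>{S. i \<notin> S}. c S * (\<Prod>j\<in>S. w$j))"
    using assms by (intro sum.cong refl arg_cong2[where f="(*)"] prod.cong) auto
  have P: "mlpoly_partial c i u = mlpoly_partial c i w"
    unfolding mlpoly_partial_def
    using assms by (intro sum.cong refl arg_cong2[where f="(*)"] prod.cong) auto
  show ?thesis
    using eval_split[of c u i] eval_split[of c w i] A P by (simp add: algebra_simps)
qed

lemma partial_cont:
  fixes c :: "'n::finite set \<Rightarrow> real"
  shows "continuous_on UNIV (mlpoly_partial c i)"
  unfolding mlpoly_partial_def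
  by (intro continuous_intros)

theorem proposition5:
  fixes c :: "'n::finite set \<Rightarrow> real" and \<eta> :: real and x :: "real^'n"
  assumes "\<eta> > 0"
    and "x \<in> cube"
    and "feasible c x"
    and "grad_map c \<eta> x = 0"
    and "\<forall>i\<in>tight x. mlpoly_partial c i x \<noteq> 0"
  shows "local_min_in (mlpoly_eval c) cube x"
proof -
  let ?I = "tight x"
  let ?g = "mlpoly_grad c x"
  let ?F = "mlpoly_eval c"
  have cvx: "convex (cube :: (real^'n) set)" "closed (cube :: (real^'n) set)"
    unfolding cube_def by auto
  have xcp: "closest_point cube (x - \<eta> *\<^sub>R ?g) = x"
  proof -
    have "(1 / \<eta>) *\<^sub>R (x - closest_point cube (x - \<eta> *\<^sub>R ?g)) = 0"
      using assms(4) unfolding grad_map_def .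
    thus ?thesis using assms(1) by simp
  qed
  have dot: "inner ?g (y - x) \<ge> 0" if "y \<in> cube" for y
  proof -
    have "inner ((x - \<eta> *\<^sub>R ?g) - x) (y - x) \<le> 0"
      using closest_point_dot[OF cvx that, of "x - \<eta> *\<^sub>R ?g"] xcp by simp
    hence "- \<eta> * inner ?g (y - x) \<le> 0" by (simp add: inner_diff_left)
    thus ?thesis using assms(1) by (simp add: zero_le_mult_iff)
  qed
  have sgn: "mlpoly_partial c i x * (y$i - x$i) \<ge> 0" if "y \<in> cube" for y i
  proof -
    let ?y = "\<chi> j. if j = i then y$i else x$j"
    have "?y \<in> cube" using that assms(2) unfolding cube_def mem_box_cart by auto
    hence "inner ?g (?y - x) \<ge> 0" by (rule dot)
    moreover have "?y - x = axis i (y$i - x$i)"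
      by (simp add: vec_eq_iff axis_def)
    ultimately show ?thesis by (simp add: inner_axis mlpoly_grad_def)
  qed
  have loc: "\<exists>d>0. \<forall>z. dist z x < d \<longrightarrow> mlpoly_partial c i z * mlpoly_partial c i x > 0"
    if "i \<in> ?I" for i
  proof -
    have ne: "\<bar>mlpoly_partial c i x\<bar> > 0" using assms(5) that by simp
    obtain d where d: "d > 0" "\<forall>z. dist z x < d \<longrightarrow>
       dist (mlpoly_partial c i z) (mlpoly_partial c i x) < \<bar>mlpoly_partial c i x\<bar>"
      using partial_cont[of c i] ne unfolding continuous_on_iff by blast
    show ?thesis
    proof (intro exI[of _ d] conjI allI impI d(1))
      fix z assume "dist z x < d"
      hence "\<bar>mlpoly_partial c i z - mlpoly_partial c i x\<bar> < \<bar>mlpoly_partial c i x\<bar>"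
        using d(2) by (simp add: dist_real_def)
      thus "mlpoly_partial c i z * mlpoly_partial c i x > 0"
        by (cases "mlpoly_partial c i x \<ge> 0") (auto simp: abs_if zero_less_mult_iff split: if_splits)
    qed
  qed
  obtain d where d: "\<forall>i\<in>?I. d i > 0 \<and> (\<forall>z. dist z x < d i \<longrightarrow> mlpoly_partial c i z * mlpoly_partial c i x > 0)"
  proof -
    have "\<forall>i\<in>?I. \<exists>e. e > 0 \<and> (\<forall>z. dist z x < e \<longrightarrow> mlpoly_partial c i z * mlpoly_partial c i x > 0)"
      using loc by blast
    from bchoice[OF this] show ?thesis using that by blast
  qed
  define \<delta> where "\<delta> = Min (insert 1 (d ` ?I))"
  have \<delta>pos: "\<delta> > 0" unfolding \<delta>_def using d by (subst Min_gr_iff) auto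
  have \<delta>le: "\<delta> \<le> d i" if "i \<in> ?I" for i unfolding \<delta>_def using that by (intro Min_le) auto
  show ?thesis
    unfolding local_min_in_def
  proof (intro exI[of _ "(\<delta>/2)\<^sup>2"] conjI ballI impI)
    show "(\<delta>/2)\<^sup>2 > 0" using \<delta>pos by simp
    fix y assume ycube: "y \<in> cube" and yn: "(norm (x - y))\<^sup>2 \<le> (\<delta>/2)\<^sup>2"
    have "norm (x - y) \<le> \<delta>/2"
      by (rule power2_le_imp_le[OF yn]) (use \<delta>pos in simp)
    hence ny: "norm (y - x) < \<delta>" using \<delta>pos by (simp add: norm_minus_commute)
    define zJ where "zJ J = (\<chi> j. if j \<in> ?I - J then x$j else y$j)" for J
    have zn: "dist (zJ J) x < \<delta>" for J
    proof -
      have "norm (zJ J - x) \<le> norm (y - x)"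
        unfolding norm_vec_def
        by (rule L2_set_mono) (auto simp: zJ_def)
      thus ?thesis using ny by (simp add: dist_norm)
    qed
    have "finite J \<Longrightarrow> J \<subseteq> ?I \<Longrightarrow> ?F (zJ J) \<ge> ?F x" for J
    proof (induction J rule: finite_induct)
      case empty
      have "?F (zJ {}) = ?F x"
        by (rule feas_const[OF assms(3)]) (auto simp: zJ_def)
      thus ?case by simp
    next
      case (insert i J)
      have iI: "i \<in> ?I" using insert.prems by auto
      have diff: "?F (zJ (insert i J)) - ?F (zJ J) = (y$i - x$i) * mlpoly_partial c i (zJ J)"
        using eval_diff[of i "zJ (insert i J)" "zJ J" c] iI insert.hyps
        by (auto simp: zJ_def)
      have p: "mlpoly_partial c i (zJ J) * mlpoly_partial c i x > 0"
        using d iI zn[of J] \<delta>le[OF iI] by (meson less_le_trans)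
      have s: "mlpoly_partial c i x * (y$i - x$i) \<ge> 0" by (rule sgn[OF ycube])
      have "(y$i - x$i) * mlpoly_partial c i (zJ J) \<ge> 0"
        using p s by (auto simp: zero_less_mult_iff zero_le_mult_iff)
      with diff insert.IH insert.prems show ?case by auto
    qed
    moreover have "zJ ?I = y" by (simp add: zJ_def vec_eq_iff)
    ultimately show "?F x \<le> ?F y" by (metis finite order_refl)
  qed
qed

end
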